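(* Let $M$ be a finite $\mathscr J$-trivial monoid and $k$ a field. Then $Q(kM)=Q(\mathscr K(M))$; that is, the vertex set of $Q(kM)$ is $E(M)$ and the set of arrows from $e$ to $f$ is $\mathrm{Irr}_{\mathscr K(M)}(e,f)$.
   Context: $M$ is $\mathscr J$-trivial if $MmM=MnM$ implies $m=n$. $E(M)$ is the set of idempotents; the simple $kM$-module attached to $e\in E(M)$ is one-dimensional with $m$ acting by $1$ if $e\in MmM$ and $0$ otherwise. The Karoubi envelope $\mathscr K(M)$ has objects $E(M)$, morphisms $e\to f$ the elements of $fMe$, composition by multiplication. A morphism is irreducible if it is neither a split monomorphism nor a split epimorphism and whenever it factors as $gh$, $h$ is a split monomorphism or $g$ a split epimorphism; $\mathrm{Irr}_{\mathscr K(M)}(e,f)$ is the set of these. $Q(\mathscr K(M))$ has as vertices the isomorphism classes of objects and as arrows the irreducible morphisms between chosen representatives. The quiver of $kM$ has $\dim\mathrm{Ext}^1(S,T)$ arrows from $S$ to $T$. *)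

theory Defs
  imports Main "HOL.Vector_Spaces" "HOL-Library.Function_Algebras"
begin

definition two_sided_ideal :: "'m::monoid_mult \<Rightarrow> 'm set" where
  "two_sided_ideal m = {a * m * b | a b. True}"

definition J_trivial :: "'m::monoid_mult itself \<Rightarrow> bool" where
  "J_trivial _ \<longleftrightarrow> (\<forall>m n::'m. two_sided_ideal m = two_sided_ideal n \<longrightarrow> m = n)"

definition idems :: "'m::monoid_mult set" where
  "idems = {e. e * e = e}"

text \<open>Character of the simple module S_e: m acts by 1 if e in MmM, else 0.\<close>
definition simple_char :: "'m::monoid_mult \<Rightarrow> 'm \<Rightarrow> 'k::field" where
  "simple_char e m = (if e \<in> two_sided_ideal m then 1 else 0)"

text \<open>One-dimensional kM-modules = monoid homomorphisms M -> (k, *).\<close>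
definition monoid_char :: "('m::monoid_mult \<Rightarrow> 'k::field) \<Rightarrow> bool" where
  "monoid_char \<chi> \<longleftrightarrow> \<chi> 1 = 1 \<and> (\<forall>m n. \<chi> (m * n) = \<chi> m * \<chi> n)"

text \<open>Karoubi envelope: morphisms e -> f are the elements of fMe; identity on e is e.\<close>
definition kmor :: "'m::monoid_mult \<Rightarrow> 'm \<Rightarrow> 'm set" where
  "kmor e f = {f * m * e | m. True}"

definition split_mono :: "'m::monoid_mult \<Rightarrow> 'm \<Rightarrow> 'm \<Rightarrow> bool" where
  "split_mono e f h \<longleftrightarrow> (\<exists>s \<in> kmor f e. s * h = e)"

definition split_epi :: "'m::monoid_mult \<Rightarrow> 'm \<Rightarrow> 'm \<Rightarrow> bool" where
  "split_epi e f g \<longleftrightarrow> (\<exists>s \<in> kmor f e. g * s = f)"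

definition Irr :: "'m::monoid_mult \<Rightarrow> 'm \<Rightarrow> 'm set" where
  "Irr e f = {x \<in> kmor e f. \<not> split_mono e f x \<and> \<not> split_epi e f x \<and>
     (\<forall>c \<in> idems. \<forall>h \<in> kmor e c. \<forall>g \<in> kmor c f. g * h = x \<longrightarrow>
        split_mono e c h \<or> split_epi c f g)}"

text \<open>Ext^1(S,T) for one-dimensional modules with characters chiS, chiT, computed via
  2-dimensional extensions 0 -> T -> E -> S -> 0 of left kM-modules: m acts on E by the matrix
  [[chiT m, d m],[0, chiS m]]. Such d (linear maps kM -> k, i.e. functions M -> k) form the
  space of cocycles; equivalent extensions differ by coboundaries c(chiT - chiS).\<close>

definition fscale :: "'k::field \<Rightarrow> ('m \<Rightarrow> 'k) \<Rightarrow> ('m \<Rightarrow> 'k)" where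
  "fscale c d = (\<lambda>m. c * d m)"

definition ext_cocycles :: "('m::monoid_mult \<Rightarrow> 'k::field) \<Rightarrow> ('m \<Rightarrow> 'k) \<Rightarrow> ('m \<Rightarrow> 'k) set" where
  "ext_cocycles chiS chiT = {d. \<forall>m n. d (m * n) = chiT m * d n + d m * chiS n}"

definition ext_coboundaries :: "('m::monoid_mult \<Rightarrow> 'k::field) \<Rightarrow> ('m \<Rightarrow> 'k) \<Rightarrow> ('m \<Rightarrow> 'k) set" where
  "ext_coboundaries chiS chiT = {(\<lambda>m. c * (chiT m - chiS m)) | c. True}"

definition dim_Ext1 :: "('m::monoid_mult \<Rightarrow> 'k::field) \<Rightarrow> ('m \<Rightarrow> 'k) \<Rightarrow> nat" where
  "dim_Ext1 chiS chiT =
     vector_space.dim (fscale :: 'k \<Rightarrow> _) (ext_cocycles chiS chiT)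
     - vector_space.dim (fscale :: 'k \<Rightarrow> _) (ext_coboundaries chiS chiT)"

end

theory Submission
  imports Defs
begin

abbreviation I :: "'m::monoid_mult \<Rightarrow> 'm set" where "I \<equiv> two_sided_ideal"

lemma I_mem: "a * m * b \<in> I m"
  unfolding two_sided_ideal_def by blast

lemma I_self: "m \<in> I m"
  using I_mem[of 1 m 1] by simp

lemma I_trans: "y \<in> I z \<Longrightarrow> I y \<subseteq> I z"
proof
  fix x assume "y \<in> I z" "x \<in> I y"
  then obtain a b c d where "y = a * z * b" "x = c * y * d" unfolding two_sided_ideal_def by blast
  then have "x = (c * a) * z * (b * d)" by (simp add: mult.assoc)
  then show "x \<in> I z" using I_mem by metis
qed

lemma Jeq:
  assumes J: "J_trivial TYPE('m::monoid_mult)" and "(y::'m) \<in> I z" "z \<in> I y"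
  shows "y = z"
  using J assms(2,3) I_trans unfolding J_trivial_def by blast

lemma idem_fix:
  assumes J: "J_trivial TYPE('m::monoid_mult)" and ee: "(e::'m) * e = e" and em: "e \<in> I m"
  shows "e * m = e \<and> m * e = e"
proof -
  obtain a b where eab: "e = a * m * b" using em unfolding two_sided_ideal_def by blast
  have "e = e * e * e" using ee by simp
  also have "\<dots> = e * (a * m * b) * e" using eab by simp
  finally have e0: "e = e * (a * m * b) * e" .
  then have e1: "e = (e * a * m) * (b * e)" by (simp add: mult.assoc)
  have e2: "e = (e * a) * (m * b * e)" using e0 by (simp add: mult.assoc)
  have y: "e * a * m = e"
  proof (rule Jeq[OF J])
    show "e * a * m \<in> I e" using I_mem[of 1 e "a * m"] by (simp add: mult.assoc)
    show "e \<in> I (e * a * m)" using I_mem[of 1 "e * a * m" "b * e"] e1 by simp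
  qed
  have z: "m * b * e = e"
  proof (rule Jeq[OF J])
    show "m * b * e \<in> I e" using I_mem[of "m * b" e 1] by simp
    have "e = (e * a) * (m * b * e) * 1" using e2 by simp
    then show "e \<in> I (m * b * e)" using I_mem by metis
  qed
  have "e * m = e"
  proof (rule Jeq[OF J])
    show "e * m \<in> I e" using I_mem[of 1 e m] by simp
    have "e = 1 * (e * m) * (b * e)" using z ee by (metis mult.assoc mult_1_left)
    then show "e \<in> I (e * m)" using I_mem by metis
  qed
  moreover have "m * e = e"
  proof (rule Jeq[OF J])
    show "m * e \<in> I e" using I_mem[of m e 1] by simp
    have "e = (e * a) * (m * e) * 1" using y ee by (metis mult.assoc mult_1_right)
    then show "e \<in> I (m * e)" using I_mem by metis
  qed
  ultimately show ?thesis by simp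
qed

lemma chiL:
  assumes J: "J_trivial TYPE('m::monoid_mult)" and ee: "(e::'m) * e = e"
  shows "(e \<in> I m) = (e * m = e)"
proof
  assume "e \<in> I m" then show "e * m = e" using idem_fix[OF J ee] by blast
next
  assume "e * m = e" then show "e \<in> I m" using I_mem[of e m 1] by simp
qed

lemma chiR:
  assumes J: "J_trivial TYPE('m::monoid_mult)" and ee: "(e::'m) * e = e"
  shows "(e \<in> I m) = (m * e = e)"
proof
  assume "e \<in> I m" then show "m * e = e" using idem_fix[OF J ee] by blast
next
  assume "m * e = e" then show "e \<in> I m" using I_mem[of 1 m e] by simp
qed


lemma simple_char_L:
  assumes J: "J_trivial TYPE('m::monoid_mult)" and ee: "(e::'m) * e = e"
  shows "simple_char e m = (if e * m = e then 1 else 0)"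
  unfolding simple_char_def using chiL[OF J ee] by simp

lemma simple_char_R:
  assumes J: "J_trivial TYPE('m::monoid_mult)" and ee: "(e::'m) * e = e"
  shows "simple_char e m = (if m * e = e then 1 else 0)"
  unfolding simple_char_def using chiR[OF J ee] by simp

lemma I_prod: "(e \<in> I (m * n)) \<Longrightarrow> e \<in> I m \<and> e \<in> I n"
proof -
  assume a: "e \<in> I (m * n)"
  have "m * n \<in> I m" using I_mem[of 1 m n] by simp
  moreover have "m * n \<in> I n" using I_mem[of m n 1] by simp
  ultimately show ?thesis using a I_trans by blast
qed

lemma simple_char_monoid:
  assumes J: "J_trivial TYPE('m::monoid_mult)" and ee: "(e::'m) * e = e"
  shows "monoid_char (simple_char e :: 'm \<Rightarrow> 'k::field)"
  unfolding monoid_char_def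
proof (intro conjI allI)
  show "(simple_char e 1 :: 'k) = 1" using simple_char_L[OF J ee, of 1] by simp
  fix m n :: 'm
  have "(e \<in> I (m * n)) = (e \<in> I m \<and> e \<in> I n)"
  proof
    assume "e \<in> I (m * n)" then show "e \<in> I m \<and> e \<in> I n" using I_prod by blast
  next
    assume "e \<in> I m \<and> e \<in> I n"
    then have "e * m = e" "e * n = e" using chiL[OF J ee] by auto
    then have "e * (m * n) = e" by (metis mult.assoc)
    then show "e \<in> I (m * n)" using chiL[OF J ee] by auto
  qed
  then show "(simple_char e (m * n) :: 'k) = simple_char e m * simple_char e n"
    unfolding simple_char_def by auto
qed

lemma bij_part:
  assumes J: "J_trivial TYPE('m::{monoid_mult,finite})"
  shows "bij_betw (simple_char :: 'm \<Rightarrow> 'm \<Rightarrow> 'k::field) idems {\<chi>. monoid_char \<chi>}"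
  unfolding bij_betw_def
proof (intro conjI)
  show "inj_on (simple_char :: 'm \<Rightarrow> 'm \<Rightarrow> 'k::field) idems"
  proof (rule inj_onI)
    fix e f :: 'm assume "e \<in> idems" "f \<in> idems"
      and eq: "(simple_char e :: 'm \<Rightarrow> 'k) = simple_char f"
    have "(simple_char e f :: 'k) = simple_char f f" using eq by simp
    also have "\<dots> = 1" unfolding simple_char_def using I_self by simp
    finally have "(simple_char e f :: 'k) = 1" .
    then have ef: "e \<in> I f" unfolding simple_char_def by (auto split: if_splits)
    have "(simple_char f e :: 'k) = simple_char e e" using eq by simp
    also have "\<dots> = 1" unfolding simple_char_def using I_self by simp
    finally have "(simple_char f e :: 'k) = 1" .
    then have "f \<in> I e" unfolding simple_char_def by (auto split: if_splits)
    then show "e = f" using Jeq[OF J] ef by blast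
  qed
  show "(simple_char :: 'm \<Rightarrow> 'm \<Rightarrow> 'k::field) ` idems = {\<chi>. monoid_char \<chi>}"
  proof
    show "(simple_char :: 'm \<Rightarrow> 'm \<Rightarrow> 'k::field) ` idems \<subseteq> {\<chi>. monoid_char \<chi>}"
      using simple_char_monoid[OF J] unfolding idems_def by blast
  next
    show "{\<chi>. monoid_char \<chi>} \<subseteq> (simple_char :: 'm \<Rightarrow> 'm \<Rightarrow> 'k::field) ` idems"
    proof
      fix \<chi> :: "'m \<Rightarrow> 'k" assume "\<chi> \<in> {\<chi>. monoid_char \<chi>}"
      then have c1: "\<chi> 1 = 1" and cm: "\<And>m n. \<chi> (m * n) = \<chi> m * \<chi> n"
        unfolding monoid_char_def by auto
      define S where "S = {m. \<chi> m \<noteq> 0}"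
      have "1 \<in> S" using c1 S_def by simp
      then obtain e where eS: "e \<in> S" and emin: "\<And>m. m \<in> S \<Longrightarrow> card (I e) \<le> card (I m)"
        using ex_has_least_nat[of "\<lambda>m. m \<in> S" 1 "\<lambda>m. card (I m)"] by blast
      have absorb: "e * m = e" if "m \<in> S" for m
      proof (rule Jeq[OF J])
        have "e * m \<in> S" using eS that cm S_def by simp
        then have "card (I e) \<le> card (I (e * m))" using emin by blast
        moreover have sub: "I (e * m) \<subseteq> I e" using I_trans I_mem[of 1 e m] by simp
        ultimately have "I (e * m) = I e" using card_subset_eq[OF finite sub]
          by (meson card_mono finite le_antisym)
        then show "e \<in> I (e * m)" using I_self by metis
        show "e * m \<in> I e" using I_mem[of 1 e m] by simp
      qed
      have ee: "e * e = e" using absorb eS by blast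
      have ce: "\<chi> e = 1"
      proof -
        have "\<chi> e = \<chi> e * \<chi> e" using cm ee by metis
        then show ?thesis using eS S_def by simp
      qed
      have "\<chi> = simple_char e"
      proof
        fix m
        show "\<chi> m = simple_char e m"
        proof (cases "m \<in> S")
          case True
          then have "e * m = e" using absorb by blast
          then have "\<chi> m = 1" using ce cm by (metis mult_1_left)
          then show ?thesis using \<open>e * m = e\<close> by (simp add: simple_char_L[OF J ee])
        next
          case False
          then have "\<chi> m = 0" using S_def by simp
          moreover have "e * m \<noteq> e"
          proof
            assume "e * m = e"
            then have "\<chi> e = \<chi> e * \<chi> m" using cm by metis
            then show False using ce \<open>\<chi> m = 0\<close> by simp
          qed
          ultimately show ?thesis by (simp add: simple_char_L[OF J ee])
        qed
      qed
      then show "\<chi> \<in> simple_char ` idems" using ee unfolding idems_def by blast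
    qed
  qed
qed

lemma idemL: "(e::'m::monoid_mult) * e = e \<Longrightarrow> e * (e * y) = e * y"
  by (metis mult.assoc)

lemma kmor_iff:
  assumes "(e::'m::monoid_mult) * e = e" "f * f = f"
  shows "x \<in> kmor e f \<longleftrightarrow> f * x * e = x"
proof
  assume "x \<in> kmor e f"
  then obtain m where "x = f * m * e" unfolding kmor_def by blast
  then show "f * x * e = x" using assms by (simp add: mult.assoc idemL)
next
  assume "f * x * e = x" then show "x \<in> kmor e f" unfolding kmor_def by (metis (mono_tags, lifting) mem_Collect_eq)
qed

lemma split_mono_iff:
  assumes J: "J_trivial TYPE('m::monoid_mult)" and ee: "(e::'m) * e = e" and cc: "c * c = c"
    and h: "h \<in> kmor e c"
  shows "split_mono e c h \<longleftrightarrow> h = e"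
proof
  assume "split_mono e c h"
  then obtain s where "s * h = e" unfolding split_mono_def by blast
  then have "e \<in> I h" using I_mem[of s h 1] by simp
  moreover obtain m where "h = c * m * e" using h unfolding kmor_def by blast
  then have "h \<in> I e" using I_mem[of "c * m" e 1] by simp
  ultimately show "h = e" using Jeq[OF J] by blast
next
  assume "h = e"
  then have "c * e * e = e" using kmor_iff[OF ee cc] h by simp
  then have ce: "c * e = e" using ee by (metis mult.assoc)
  have "e * c \<in> kmor c e" using kmor_iff[OF cc ee] ee cc by (simp add: mult.assoc idemL)
  moreover have "e * c * h = e" using \<open>h = e\<close> ce ee by (simp add: mult.assoc)
  ultimately show "split_mono e c h" unfolding split_mono_def by blast
qed

lemma split_epi_iff:
  assumes J: "J_trivial TYPE('m::monoid_mult)" and ff: "(f::'m) * f = f" and cc: "c * c = c"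
    and g: "g \<in> kmor c f"
  shows "split_epi c f g \<longleftrightarrow> g = f"
proof
  assume "split_epi c f g"
  then obtain s where "g * s = f" unfolding split_epi_def by blast
  then have "f \<in> I g" using I_mem[of 1 g s] by simp
  moreover obtain m where "g = f * m * c" using g unfolding kmor_def by blast
  then have "g \<in> I f" using I_mem[of 1 f "m * c"] by (simp add: mult.assoc)
  ultimately show "g = f" using Jeq[OF J] by blast
next
  assume "g = f"
  then have "f * f * c = f" using kmor_iff[OF cc ff] g by simp
  then have fc: "f * c = f" using ff by simp
  have "c * f \<in> kmor f c" using kmor_iff[OF ff cc] ff cc by (simp add: mult.assoc idemL)
  moreover have "g * (c * f) = f" using \<open>g = f\<close> fc ff by (simp add: mult.assoc[symmetric])
  ultimately show "split_epi c f g" unfolding split_epi_def by blast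
qed

lemma Irr_iff:
  assumes J: "J_trivial TYPE('m::monoid_mult)" and ee: "(e::'m) * e = e" and ff: "f * f = f"
  shows "x \<in> Irr e f \<longleftrightarrow> f * x * e = x \<and> x \<noteq> e \<and> x \<noteq> f \<and>
            (\<forall>u v. u * v = x \<longrightarrow> v * e = e \<or> f * u = f)"
proof
  assume xI: "x \<in> Irr e f"
  then have xk: "x \<in> kmor e f" unfolding Irr_def by blast
  have fac: "\<forall>c \<in> idems. \<forall>h \<in> kmor e c. \<forall>g \<in> kmor c f. g * h = x \<longrightarrow>
        split_mono e c h \<or> split_epi c f g" using xI unfolding Irr_def by blast
  have one: "(1::'m) \<in> idems" unfolding idems_def by simp
  have "\<forall>u v. u * v = x \<longrightarrow> v * e = e \<or> f * u = f"
  proof (intro allI impI)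
    fix u v assume uv: "u * v = x"
    have hk: "v * e \<in> kmor e 1" using kmor_iff[OF ee, of 1] ee by (simp add: mult.assoc)
    have gk: "f * u \<in> kmor 1 f" using kmor_iff[OF _ ff, of 1] ff by (simp add: mult.assoc[symmetric])
    have "(f * u) * (v * e) = x" using uv xk kmor_iff[OF ee ff] by (metis mult.assoc)
    then have "split_mono e 1 (v * e) \<or> split_epi 1 f (f * u)" using fac one hk gk by blast
    then show "v * e = e \<or> f * u = f"
      using split_mono_iff[OF J ee _ hk] split_epi_iff[OF J ff _ gk] by simp
  qed
  then show "f * x * e = x \<and> x \<noteq> e \<and> x \<noteq> f \<and> (\<forall>u v. u * v = x \<longrightarrow> v * e = e \<or> f * u = f)"
    using xI xk kmor_iff[OF ee ff] split_mono_iff[OF J ee ff xk] split_epi_iff[OF J ff ee xk]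
    unfolding Irr_def by blast
next
  assume A: "f * x * e = x \<and> x \<noteq> e \<and> x \<noteq> f \<and> (\<forall>u v. u * v = x \<longrightarrow> v * e = e \<or> f * u = f)"
  then have xk: "x \<in> kmor e f" using kmor_iff[OF ee ff] by blast
  have "\<forall>c \<in> idems. \<forall>h \<in> kmor e c. \<forall>g \<in> kmor c f. g * h = x \<longrightarrow>
        split_mono e c h \<or> split_epi c f g"
  proof (intro ballI impI)
    fix c h g assume c: "c \<in> idems" and hk: "h \<in> kmor e c" and gk: "g \<in> kmor c f" and gh: "g * h = x"
    have cc: "c * c = c" using c unfolding idems_def by simp
    have "c * h * e = h" using hk kmor_iff[OF ee cc] by blast
    then have he: "h * e = h" using ee by (metis mult.assoc)
    have "f * g * c = g" using gk kmor_iff[OF cc ff] by blast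
    then have fg: "f * g = g" using ff by (metis mult.assoc)
    have "h * e = e \<or> f * g = f" using A gh by blast
    then have "h = e \<or> g = f" using he fg by simp
    then show "split_mono e c h \<or> split_epi c f g"
      using split_mono_iff[OF J ee cc hk] split_epi_iff[OF J ff cc gk] by blast
  qed
  then show "x \<in> Irr e f" using A xk split_mono_iff[OF J ee ff xk] split_epi_iff[OF J ff ee xk]
    unfolding Irr_def by blast
qed


lemma kernel_lemma:
  assumes J: "J_trivial TYPE('m::monoid_mult)" and ee: "(e::'m) * e = e" and ff: "f * f = f"
    and dZ: "d \<in> ext_cocycles (simple_char e) (simple_char f :: 'm \<Rightarrow> 'k::field)"
    and d0: "\<forall>y \<in> Irr e f. d y = 0"
  shows "\<exists>c. \<forall>m. d m = c * (simple_char f m - simple_char e m)"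
proof -
  define a :: "'m \<Rightarrow> 'k" where "a = simple_char f"
  define b :: "'m \<Rightarrow> 'k" where "b = simple_char e"
  have aL: "\<And>m. a m = (if f * m = f then 1 else 0)" unfolding a_def by (simp add: simple_char_L[OF J ff])
  have bR: "\<And>m. b m = (if m * e = e then 1 else 0)" unfolding b_def by (simp add: simple_char_R[OF J ee])
  have co: "\<And>u v. d (u * v) = a u * d v + d u * b v"
    using dZ unfolding ext_cocycles_def a_def b_def by blast
  have af: "a f = 1" using aL ff by simp
  have be: "b e = 1" using bR ee by simp
  have P: "d y = 0" if fye: "f * y * e = y" and ye: "y \<noteq> e" and yf: "y \<noteq> f" for y
  proof (cases "y \<in> Irr e f")
    case True then show ?thesis using d0 by blast
  next
    case False
    then obtain u v where uv: "u * v = y" "v * e \<noteq> e" "f * u \<noteq> f"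
      using Irr_iff[OF J ee ff, of y] fye ye yf by blast
    then have "a u = 0" "b v = 0" using aL bR by auto
    then show ?thesis using co[of u v] uv by simp
  qed
  have F: "d m = d (f * m * e) - a m * d e - b m * d f" for m
  proof -
    have bme: "b (m * e) = b m" using bR ee by (simp add: mult.assoc)
    have "d (f * (m * e)) = a f * d (m * e) + d f * b (m * e)" by (rule co)
    also have "\<dots> = a m * d e + d m + d f * b m" using co[of m e] af be bme by simp
    finally show ?thesis by (simp add: mult.assoc algebra_simps)
  qed
  have ae: "a e * d e = 0" using co[of e e] ee be by simp
  have bf: "d f * b f = 0" using co[of f f] ff af by simp
  have aE: "a e = (if f * e = f then 1 else 0)" using aL by simp
  have bF: "b f = (if f * e = e then 1 else 0)" using bR by simp
  have fme_e: "f * e = e" if "f * m * e = e" for m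
  proof -
    have "e \<in> I f" using I_mem[of 1 f "m * e"] that by (simp add: mult.assoc)
    then show ?thesis using chiR[OF J ee] by blast
  qed
  have fme_f: "f * e = f" if "f * m * e = f" for m
  proof -
    have "f \<in> I e" using I_mem[of "f * m" e 1] that by simp
    then show ?thesis using chiL[OF J ff] by blast
  qed
  have fm_f: "f * m = f" if "f * m * e = f" for m
  proof -
    have "f \<in> I m" using I_mem[of f m e] that by simp
    then show ?thesis using chiL[OF J ff] by blast
  qed
  have me_e: "m * e = e" if "f * m * e = e" for m
  proof -
    have "e \<in> I m" using I_mem[of f m e] that by simp
    then show ?thesis using chiR[OF J ee] by blast
  qed
  have goal: "\<exists>c. \<forall>m. d m = c * (a m - b m)"
  proof (cases "e = f")
    case True
    have de: "d e = 0" using ae aE True ee by simp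
    have "d m = 0" for m
    proof -
      have "d m = d (f * m * e)" using F[of m] de True by simp
      also have "\<dots> = 0"
      proof (cases "f * m * e = e")
        case True then show ?thesis using de by simp
      next
        case False
        then show ?thesis using P[of "f * m * e"] True \<open>e = f\<close> ff by (simp add: mult.assoc idemL)
      qed
      finally show ?thesis .
    qed
    then show ?thesis by (intro exI[of _ 0]) simp
  next
    case ne: False
    have fmefix: "f * (f * m * e) * e = f * m * e" for m using ee ff by (simp add: mult.assoc idemL)
    show ?thesis
    proof (cases "f * e = f")
      case fe: True
      have de: "d e = 0" using ae aE fe by simp
      have fe_ne: "f * e \<noteq> e" using fe ne by simp
      have "d m = d f * (a m - b m)" for m
      proof (cases "f * m * e = f")
        case True
        then have "a m = 1" using fm_f aL by simp
        then show ?thesis using F[of m] True de by (simp add: algebra_simps eq_neg_iff_add_eq_0)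
      next
        case False
        have "f * m * e \<noteq> e" using fme_e fe_ne by blast
        then have z: "d (f * m * e) = 0" using P[OF fmefix] False by blast
        have "f * m \<noteq> f" using False fe by (metis)
        then have "a m = 0" using aL by simp
        then show ?thesis using F[of m] z de by (simp add: algebra_simps eq_neg_iff_add_eq_0)
      qed
      then show ?thesis by blast
    next
      case fe: False
      have ae0: "a e = 0" using aE fe by simp
      show ?thesis
      proof (cases "f * e = e")
        case fe2: True
        have df: "d f = 0" using bf bF fe2 by simp
        have "d m = (- d e) * (a m - b m)" for m
        proof (cases "f * m * e = e")
          case True
          then have "b m = 1" using me_e bR by simp
          then show ?thesis using F[of m] True df by (simp add: algebra_simps eq_neg_iff_add_eq_0)
        next
          case False
          have "f * m * e \<noteq> f" using fme_f fe by blast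
          then have z: "d (f * m * e) = 0" using P[OF fmefix] False by blast
          have "m * e \<noteq> e" using False fe2 by (metis mult.assoc)
          then have "b m = 0" using bR by simp
          then show ?thesis using F[of m] z df by (simp add: algebra_simps eq_neg_iff_add_eq_0)
        qed
        then show ?thesis by blast
      next
        case fe2: False
        have "d (f * e) = a f * d e + d f * b e" by (rule co)
        then have dfe: "d (f * e) = d e + d f" using af be by simp
        have "d (f * e) = 0" using P[of "f * e"] fe fe2 ee ff by (simp add: mult.assoc idemL)
        then have dfde: "d e = - d f" using dfe by (simp add: eq_neg_iff_add_eq_0)
        have "d m = d f * (a m - b m)" for m
        proof -
          have "f * m * e \<noteq> f" using fme_f fe by blast
          moreover have "f * m * e \<noteq> e" using fme_e fe2 by blast
          ultimately have z: "d (f * m * e) = 0" using P[OF fmefix] by blast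
          show ?thesis using F[of m] z dfde by (simp add: algebra_simps eq_neg_iff_add_eq_0)
        qed
        then show ?thesis by blast
      qed
    qed
  qed
  then show ?thesis unfolding a_def b_def .
qed


lemma vs_fscale: "vector_space (fscale :: 'k::field \<Rightarrow> ('m \<Rightarrow> 'k) \<Rightarrow> ('m \<Rightarrow> 'k))"
  by unfold_locales (auto simp: fscale_def fun_eq_iff algebra_simps)

lemma sum_fun_apply: "(\<Sum>x\<in>A. F x) y = (\<Sum>x\<in>A. F x y)"
  by (induction A rule: infinite_finite_induct) auto

lemma fscale_apply[simp]: "fscale c d m = c * d m"
  by (simp add: fscale_def)


lemma ext_part:
  assumes J: "J_trivial TYPE('m::{monoid_mult,finite})" and ee: "(e::'m) * e = e" and ff: "f * f = f"
  shows "dim_Ext1 (simple_char e :: 'm \<Rightarrow> 'k::field) (simple_char f) = card (Irr e f)"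
proof -
  interpret fs: vector_space "fscale :: 'k \<Rightarrow> ('m \<Rightarrow> 'k) \<Rightarrow> ('m \<Rightarrow> 'k)" by (rule vs_fscale)
  define a :: "'m \<Rightarrow> 'k" where "a = simple_char f"
  define b :: "'m \<Rightarrow> 'k" where "b = simple_char e"
  have aL: "\<And>m. a m = (if f * m = f then 1 else 0)" unfolding a_def by (simp add: simple_char_L[OF J ff])
  have bR: "\<And>m. b m = (if m * e = e then 1 else 0)" unfolding b_def by (simp add: simple_char_R[OF J ee])
  have amul: "\<And>m n. a (m * n) = a m * a n"
    using simple_char_monoid[OF J ff] unfolding a_def monoid_char_def by blast
  have bmul: "\<And>m n. b (m * n) = b m * b n"
    using simple_char_monoid[OF J ee] unfolding b_def monoid_char_def by blast
  define Z where "Z = ext_cocycles b a"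
  define Bd where "Bd = ext_coboundaries b a"
  define g :: "'m \<Rightarrow> 'k" where "g = (\<lambda>m. a m - b m)"
  define Ir where "Ir = Irr e f"
  define dx :: "'m \<Rightarrow> 'm \<Rightarrow> 'k" where
    "dx x = (\<lambda>m. (if f * m * e = x then 1 else 0) - (if f * e = x then 1 else 0) * a m)" for x
  define D where "D = dx ` Ir"
  have finIr: "finite Ir" by simp
  have IrD: "y \<in> Ir \<Longrightarrow> f * y * e = y \<and> y \<noteq> e \<and> y \<noteq> f \<and> (\<forall>u v. u * v = y \<longrightarrow> v * e = e \<or> f * u = f)" for y
    using Irr_iff[OF J ee ff] Ir_def by blast
  have a_Ir: "a y = 0" if "y \<in> Ir" for y
  proof -
    have y: "f * y * e = y" "y \<noteq> f" using IrD[OF that] by auto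
    have "f * y \<noteq> f"
    proof
      assume "f * y = f"
      then have "f \<in> I y" using I_mem[of f y 1] by simp
      moreover have "y \<in> I f" using I_mem[of 1 f "y * e"] y by (simp add: mult.assoc)
      ultimately show False using Jeq[OF J] y by blast
    qed
    then show ?thesis using aL by simp
  qed
  have b_Ir: "b y = 0" if "y \<in> Ir" for y
  proof -
    have y: "f * y * e = y" "y \<noteq> e" using IrD[OF that] by auto
    have "y * e \<noteq> e"
    proof
      assume "y * e = e"
      then have "e \<in> I y" using I_mem[of 1 y e] by simp
      moreover have "y \<in> I e" using I_mem[of "f * y" e 1] y by simp
      ultimately show False using Jeq[OF J] y by blast
    qed
    then show ?thesis using bR by simp
  qed
  have dx_Ir: "dx x y = (if y = x then 1 else 0)" if "y \<in> Ir" for x y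
    using IrD[OF that] a_Ir[OF that] unfolding dx_def by simp
  have g_Ir: "g y = 0" if "y \<in> Ir" for y
    using a_Ir[OF that] b_Ir[OF that] g_def by simp
  have inj: "inj_on dx Ir"
  proof (rule inj_onI)
    fix x y assume "x \<in> Ir" "y \<in> Ir" "dx x = dx y"
    then have "dx x y = dx y y" by simp
    then show "x = y" using dx_Ir[OF \<open>y \<in> Ir\<close>] by (simp split: if_splits)
  qed
  have Zsub: "fs.subspace Z"
    unfolding fs.subspace_def Z_def ext_cocycles_def
    by (auto simp: algebra_simps)
  have gZ: "g \<in> Z"
    unfolding Z_def ext_cocycles_def g_def using amul bmul by (auto simp: algebra_simps)
  have dxZ: "dx x \<in> Z" if xI: "x \<in> Ir" for x
  proof -
    have X: "f * x * e = x" "\<forall>u v. u * v = x \<longrightarrow> v * e = e \<or> f * u = f" using IrD[OF xI] by auto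
    have "dx x (u * v) = a u * dx x v + dx x u * b v" for u v
    proof (cases "f * u = f")
      case fu: True
      have A: "f * (u * v) * e = f * v * e" using fu by (metis mult.assoc)
      have au: "a u = 1" using aL fu by simp
      show ?thesis
      proof (cases "v * e = e")
        case True
        have "f * v * e = f * e" using True by (simp add: mult.assoc)
        moreover have "f * u * e = f * e" using fu by simp
        moreover have "b v = 1" using bR True by simp
        ultimately show ?thesis unfolding dx_def using A au amul[of u v]
          by (auto simp: algebra_simps)
      next
        case False
        have "b v = 0" using bR False by simp
        then show ?thesis unfolding dx_def using A au amul[of u v] by (auto simp: algebra_simps)
      qed
    next
      case fu: False
      have au: "a u = 0" using aL fu by simp
      show ?thesis
      proof (cases "v * e = e")
        case True
        have A: "f * (u * v) * e = f * u * e" using True by (metis mult.assoc)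
        have "b v = 1" using bR True by simp
        then show ?thesis unfolding dx_def using A au amul[of u v] by (auto simp: algebra_simps)
      next
        case False
        have bv: "b v = 0" using bR False by simp
        have "f * (u * v) * e \<noteq> x"
        proof
          assume "f * (u * v) * e = x"
          then have "(f * u) * (v * e) = x" by (metis mult.assoc)
          then have "(v * e) * e = e \<or> f * (f * u) = f" using X by blast
          then show False using fu False ee ff by (simp add: mult.assoc idemL)
        qed
        then show ?thesis unfolding dx_def using au bv amul[of u v] by (auto simp: algebra_simps)
      qed
    qed
    then show ?thesis unfolding Z_def ext_cocycles_def by blast
  qed
  have finD: "finite D" unfolding D_def by simp
  have evalsum: "(\<Sum>v\<in>D. fscale (u v) v) y = u (dx y)" if "y \<in> Ir" for u y
  proof -
    have "(\<Sum>v\<in>D. fscale (u v) v) y = (\<Sum>v\<in>D. u v * v y)" by (simp add: sum_fun_apply)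
    also have "\<dots> = (\<Sum>x\<in>Ir. u (dx x) * dx x y)" unfolding D_def by (simp add: sum.reindex[OF inj])
    also have "\<dots> = (\<Sum>x\<in>Ir. if x = y then u (dx y) else 0)"
      by (rule sum.cong) (auto simp: dx_Ir[OF that])
    also have "\<dots> = u (dx y)" using that finIr by simp
    finally show ?thesis .
  qed
  have indD: "fs.independent D"
  proof
    assume "fs.dependent D"
    then obtain u v where v: "v \<in> D" "u v \<noteq> 0" and s: "(\<Sum>v\<in>D. fscale (u v) v) = 0"
      using fs.dependent_finite[OF finD] by blast
    obtain y where y: "y \<in> Ir" "v = dx y" using v D_def by blast
    have "(\<Sum>v\<in>D. fscale (u v) v) y = 0" using s by simp
    then show False using evalsum[OF y(1)] y v by simp
  qed
  have spanD_vanish: "w \<in> fs.span D \<Longrightarrow> (\<forall>y\<in>Ir. w y = 0) \<Longrightarrow> w = 0" for w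
  proof -
    assume w: "w \<in> fs.span D" and wv: "\<forall>y\<in>Ir. w y = 0"
    obtain u where wu: "w = (\<Sum>v\<in>D. fscale (u v) v)" using w fs.span_finite[OF finD] by blast
    have "\<forall>v\<in>D. u v = 0"
    proof
      fix v assume "v \<in> D"
      then obtain y where y: "y \<in> Ir" "v = dx y" using D_def by blast
      show "u v = 0" using evalsum[OF y(1), of u] wu wv y by simp
    qed
    then have "(\<Sum>v\<in>D. fscale (u v) v) = (\<Sum>v\<in>D. 0)"
      by (intro sum.cong) (auto simp: fscale_def fun_eq_iff)
    then show "w = 0" using wu by simp
  qed
  have Zeq: "Z = fs.span (insert g D)"
  proof
    show "fs.span (insert g D) \<subseteq> Z"
    proof (rule fs.span_minimal[OF _ Zsub])
      show "insert g D \<subseteq> Z" using gZ dxZ unfolding D_def by blast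
    qed
  next
    show "Z \<subseteq> fs.span (insert g D)"
    proof
      fix d assume dZ: "d \<in> Z"
      define s where "s = (\<Sum>x\<in>Ir. fscale (d x) (dx x))"
      have sZ: "s \<in> Z" unfolding s_def
        by (rule fs.subspace_sum[OF Zsub]) (rule fs.subspace_scale[OF Zsub dxZ])
      have sspan: "s \<in> fs.span (insert g D)" unfolding s_def
        by (rule fs.span_sum, rule fs.span_scale, rule fs.span_base) (auto simp: D_def)
      have rZ: "d - s \<in> Z" using fs.subspace_diff[OF Zsub dZ sZ] .
      have rv: "\<forall>y \<in> Irr e f. (d - s) y = 0"
      proof
        fix y assume "y \<in> Irr e f"
        then have y: "y \<in> Ir" using Ir_def by simp
        have "s y = (\<Sum>x\<in>Ir. d x * dx x y)" unfolding s_def by (simp add: sum_fun_apply)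
        also have "\<dots> = (\<Sum>x\<in>Ir. if x = y then d y else 0)"
          by (rule sum.cong) (auto simp: dx_Ir[OF y])
        also have "\<dots> = d y" using y finIr by simp
        finally show "(d - s) y = 0" by simp
      qed
      obtain c where c: "\<forall>m. (d - s) m = c * (simple_char f m - simple_char e m)"
        using kernel_lemma[OF J ee ff _ rv] rZ unfolding Z_def a_def b_def by blast
      have "d - s = fscale c g" using c unfolding g_def a_def b_def by (auto simp: fun_eq_iff)
      have gs: "g \<in> fs.span (insert g D)" by (rule fs.span_base) simp
      have "fscale c g \<in> fs.span (insert g D)" using fs.span_scale[OF gs] .
      then have r: "d - s \<in> fs.span (insert g D)" using \<open>d - s = fscale c g\<close> by simp
      have "(d - s) + s \<in> fs.span (insert g D)" by (rule fs.span_add[OF r sspan])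
      then show "d \<in> fs.span (insert g D)" by simp
    qed
  qed
  have Bdeq: "Bd = fs.span {g}"
    unfolding Bd_def ext_coboundaries_def fs.span_singleton g_def by (auto simp: fscale_def)
  have g0: "g = 0 \<longleftrightarrow> e = f"
  proof
    assume "g = 0"
    then have "a e = b e" "a f = b f" unfolding g_def by (auto simp: fun_eq_iff)
    then have "f * e = f" "f * e = e" using aL bR ee ff by (auto split: if_splits)
    then show "e = f" by simp
  next
    assume "e = f" then show "g = 0" unfolding g_def a_def b_def by (simp add: fun_eq_iff)
  qed
  have dimD: "fs.dim D = card Ir"
    using fs.dim_eq_card_independent[OF indD] card_image[OF inj] D_def by simp
  have "dim_Ext1 b a = fs.dim Z - fs.dim Bd" unfolding dim_Ext1_def Z_def Bd_def by simp
  also have "\<dots> = card Ir"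
  proof (cases "e = f")
    case True
    then have g00: "g = 0" using g0 by simp
    have "fs.span D = fs.span (insert g D)" unfolding g00 by simp
    then have "fs.dim Z = card D" unfolding Zeq using fs.dim_eq_card[OF _ indD] by simp
    moreover have "fs.dim Bd = 0"
    proof -
      have "fs.span {} = fs.span {g}" unfolding g00 by simp
      then show ?thesis unfolding Bdeq using fs.dim_eq_card[OF _ fs.independent_empty] by simp
    qed
    ultimately show ?thesis using card_image[OF inj] D_def by simp
  next
    case False
    then have gn: "g \<noteq> 0" using g0 by simp
    have gD: "g \<notin> fs.span D"
    proof
      assume "g \<in> fs.span D"
      then show False using spanD_vanish g_Ir gn by blast
    qed
    then have gD': "g \<notin> D" using fs.span_base by blast
    have ind2: "fs.independent (insert g D)" by (rule fs.independent_insertI[OF gD indD])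
    have "fs.dim Z = card (insert g D)" unfolding Zeq using fs.dim_eq_card[OF refl ind2] by simp
    also have "\<dots> = card D + 1" using gD' finD by simp
    finally have dZ: "fs.dim Z = card D + 1" .
    have ind1: "fs.independent {g}"
      by (rule fs.independent_insertI) (use gn fs.independent_empty in auto)
    have "fs.dim Bd = 1" unfolding Bdeq using fs.dim_eq_card[OF refl ind1] by simp
    then show ?thesis using dZ card_image[OF inj] D_def by simp
  qed
  finally show ?thesis unfolding a_def b_def Ir_def .
qed

theorem mainTheorem6:
  assumes "J_trivial TYPE('m::{monoid_mult,finite})"
  shows "bij_betw (simple_char :: 'm \<Rightarrow> 'm \<Rightarrow> 'k::field) idems {\<chi>. monoid_char \<chi>}
    \<and> (\<forall>e \<in> (idems :: 'm set). \<forall>f \<in> idems.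
          dim_Ext1 (simple_char e :: 'm \<Rightarrow> 'k) (simple_char f) = card (Irr e f))"
  using bij_part[OF assms] ext_part[OF assms] unfolding idems_def by blast

end
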